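(* Let $(\Omega,\mathcal F,\mu)$ be a measure space, $p\in[1,\infty)$, $f\in L^p(\Omega,\mathcal F,\mu)$, and $1\le m<k$ integers. If there exists $g\in\mathscr G_{p,m}$ with $\|f-g\|_p=\mathscr D_{p,k}(f)$, then $f\in\mathscr G_{p,m}$ (i.e. $f$ coincides $\mu$-a.e. with an element of $\mathscr G_{p,m}$).
   Context: All measures are assumed not identically zero. $\mathscr G_{p,k}$ is the set of functions $\sum_{i=1}^l a_i\mathbf 1_{A_i}\in L^p$ with $l\le k$, $\{A_i\}$ a measurable partition of $\Omega$, $a_i\in\mathbb R$; $\mathscr D_{p,k}(f)=\inf\{\|f-h\|_p:\ h\in\mathscr G_{p,k}\}$. *)

theory Defs
  imports "HOL-Analysis.Analysis"
begin

definition memLp :: "'a measure \<Rightarrow> real \<Rightarrow> ('a \<Rightarrow> real) \<Rightarrow> bool" where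
  "memLp M p f \<longleftrightarrow> f \<in> borel_measurable M \<and> integrable M (\<lambda>x. \<bar>f x\<bar> powr p)"

definition Lp_norm :: "'a measure \<Rightarrow> real \<Rightarrow> ('a \<Rightarrow> real) \<Rightarrow> real" where
  "Lp_norm M p f = (integral\<^sup>L M (\<lambda>x. \<bar>f x\<bar> powr p)) powr (1 / p)"

definition Gpk :: "'a measure \<Rightarrow> real \<Rightarrow> nat \<Rightarrow> ('a \<Rightarrow> real) set" where
  "Gpk M p k = {h. memLp M p h \<and>
     (\<exists>l::nat. \<exists>a::nat \<Rightarrow> real. \<exists>A::nat \<Rightarrow> 'a set.
        l \<le> k \<and> (\<forall>i<l. A i \<in> sets M) \<and> disjoint_family_on A {..<l} \<and>
        (\<Union>i<l. A i) = space M \<and>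
        (\<forall>x. h x = (\<Sum>i<l. a i * indicator (A i) x)))}"

definition Dpk :: "'a measure \<Rightarrow> real \<Rightarrow> nat \<Rightarrow> ('a \<Rightarrow> real) \<Rightarrow> real" where
  "Dpk M p k f = Inf {Lp_norm M p (\<lambda>x. f x - h x) | h. h \<in> Gpk M p k}"

end

theory Submission
  imports Defs
begin

lemma powr_add_bound:
  fixes x y p :: real assumes "0 \<le> p"
  shows "\<bar>x - y\<bar> powr p \<le> 2 powr p * (\<bar>x\<bar> powr p + \<bar>y\<bar> powr p)"
proof -
  have "\<bar>x - y\<bar> \<le> 2 * max \<bar>x\<bar> \<bar>y\<bar>" by auto
  hence "\<bar>x - y\<bar> powr p \<le> (2 * max \<bar>x\<bar> \<bar>y\<bar>) powr p"
    by (intro powr_mono2 assms) auto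
  also have "\<dots> = 2 powr p * max \<bar>x\<bar> \<bar>y\<bar> powr p" by (simp add: powr_mult)
  also have "max \<bar>x\<bar> \<bar>y\<bar> powr p \<le> \<bar>x\<bar> powr p + \<bar>y\<bar> powr p"
    by (cases "\<bar>x\<bar> \<le> \<bar>y\<bar>") (auto simp: max_def)
  hence "2 powr p * max \<bar>x\<bar> \<bar>y\<bar> powr p \<le> 2 powr p * (\<bar>x\<bar> powr p + \<bar>y\<bar> powr p)"
    by (intro mult_left_mono) auto
  finally show ?thesis .
qed

lemma memLp_diff:
  assumes "0 \<le> p" "memLp M p f" "memLp M p g"
  shows "memLp M p (\<lambda>x. f x - g x)"
proof -
  have m: "f \<in> borel_measurable M" "g \<in> borel_measurable M"
    and i: "integrable M (\<lambda>x. \<bar>f x\<bar> powr p)" "integrable M (\<lambda>x. \<bar>g x\<bar> powr p)"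
    using assms by (auto simp: memLp_def)
  have "integrable M (\<lambda>x. \<bar>f x - g x\<bar> powr p)"
  proof (rule Bochner_Integration.integrable_bound[where f="\<lambda>x. 2 powr p * (\<bar>f x\<bar> powr p + \<bar>g x\<bar> powr p)"])
    show "integrable M (\<lambda>x. 2 powr p * (\<bar>f x\<bar> powr p + \<bar>g x\<bar> powr p))"
      using i by auto
    show "(\<lambda>x. \<bar>f x - g x\<bar> powr p) \<in> borel_measurable M" using m by measurable
    show "AE x in M. norm (\<bar>f x - g x\<bar> powr p) \<le> norm (2 powr p * (\<bar>f x\<bar> powr p + \<bar>g x\<bar> powr p))"
      using powr_add_bound[OF assms(1)] by auto
  qed
  thus ?thesis using m by (auto simp: memLp_def)
qed

lemma Gpk_extend:
  assumes "l \<le> m" "m < k" "\<forall>i<l. A i \<in> sets M" "disjoint_family_on A {..<l}"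
    "(\<Union>i<l. A i) = space M" "\<forall>x. g x = (\<Sum>i<l. a i * indicator (A i) x)"
    "i < l" "B \<subseteq> A i" "B \<in> sets M" "memLp M p h"
    "\<forall>x. h x = g x + c * indicator B x"
  shows "h \<in> Gpk M p k"
proof -
  define A' where "A' j = (if j = i then A i - B else if j = l then B else A j)" for j
  define a' where "a' j = (if j = l then a i + c else a j)" for j
  have f0: "Suc l \<le> k" using assms by auto
  have "l \<noteq> i" "i \<noteq> l" using assms(7) by simp_all
  moreover have "\<forall>j<Suc l. A' j \<in> sets M" using assms by (auto simp: A'_def)
  moreover have "disjoint_family_on A' {..<Suc l}"
    using assms(4,7,8) unfolding disjoint_family_on_def A'_def by (auto simp: less_Suc_eq; blast)
  moreover have "(\<Union>j<Suc l. A' j) = space M"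
  proof -
    have "(\<Union>j<Suc l. A' j) = (\<Union>j<l. A j)"
    proof (intro equalityI subsetI)
      fix x assume "x \<in> (\<Union>j<Suc l. A' j)"
      then obtain j where "j < Suc l" "x \<in> A' j" by blast
      thus "x \<in> (\<Union>j<l. A j)" using assms(7,8) by (cases "j = i"; cases "j = l") (auto simp: A'_def)
    next
      fix x assume "x \<in> (\<Union>j<l. A j)"
      then obtain j where j: "j < l" "x \<in> A j" by blast
      show "x \<in> (\<Union>j<Suc l. A' j)"
      proof (cases "j = i \<and> x \<in> B")
        case True thus ?thesis using assms(7,8) j by (auto simp: A'_def intro!: bexI[of _ l])
      next
        case False thus ?thesis using j by (auto simp: A'_def intro!: bexI[of _ j])
      qed
    qed
    thus ?thesis using assms(5) by simp
  qed
  moreover have "\<forall>x. h x = (\<Sum>j<Suc l. a' j * indicator (A' j) x)"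
  proof
    fix x
    have e1: "(\<Sum>j<Suc l. a' j * indicator (A' j) x) = (\<Sum>j<l. a' j * indicator (A' j) x) + a i * indicator B x + c * indicator B x"
      using \<open>l \<noteq> i\<close> by (simp add: a'_def A'_def algebra_simps)
    have e2: "(\<Sum>j\<in>{..<l}-{i}. a' j * indicator (A' j) x) = (\<Sum>j<l. a' j * indicator (A' j) x) - a' i * indicator (A' i) x"
      using assms(7) by (simp only: sum_diff1 finite_lessThan lessThan_iff if_True)
    have e3: "(\<Sum>j\<in>{..<l}-{i}. a' j * indicator (A' j) x) = (\<Sum>j\<in>{..<l}-{i}. a j * indicator (A j) x)"
      by (rule sum.cong) (auto simp: a'_def A'_def)
    have e4: "a' i * indicator (A' i) x = a i * indicator (A i) x - a i * indicator B x"
      using \<open>i \<noteq> l\<close> assms(8) by (auto simp: a'_def A'_def indicator_def)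
    have e5: "(\<Sum>j\<in>{..<l}-{i}. a j * indicator (A j) x) = (\<Sum>j<l. a j * indicator (A j) x) - a i * indicator (A i) x"
      using assms(7) by (simp only: sum_diff1 finite_lessThan lessThan_iff if_True)
    have e6: "g x = (\<Sum>j<l. a j * indicator (A j) x)" using assms(6) by blast
    have e7: "h x = g x + c * indicator B x" using assms(11) by blast
    show "h x = (\<Sum>j<Suc l. a' j * indicator (A' j) x)"
      using e1 e2 e3 e4 e5 e6 e7 by linarith
  qed
    ultimately have "Suc l \<le> k \<and> (\<forall>j<Suc l. A' j \<in> sets M) \<and> disjoint_family_on A' {..<Suc l} \<and>
        (\<Union>j<Suc l. A' j) = space M \<and> (\<forall>x. h x = (\<Sum>j<Suc l. a' j * indicator (A' j) x))"
    using f0 by blast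
  hence "\<exists>l'::nat. \<exists>a''::nat \<Rightarrow> real. \<exists>A''::nat \<Rightarrow> 'a set.
        l' \<le> k \<and> (\<forall>i<l'. A'' i \<in> sets M) \<and> disjoint_family_on A'' {..<l'} \<and>
        (\<Union>i<l'. A'' i) = space M \<and> (\<forall>x. h x = (\<Sum>i<l'. a'' i * indicator (A'' i) x))"
    by (intro exI)
  thus ?thesis using assms(10) unfolding Gpk_def by blast
qed

theorem proposition2p16:
  fixes M :: "'a measure" and p :: real and f :: "'a \<Rightarrow> real" and m k :: nat
  assumes "emeasure M (space M) \<noteq> 0"
    and "1 \<le> p"
    and "memLp M p f"
    and "1 \<le> m" and "m < k"
    and "\<exists>g \<in> Gpk M p m. Lp_norm M p (\<lambda>x. f x - g x) = Dpk M p k f"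
  shows "\<exists>h \<in> Gpk M p m. AE x in M. f x = h x"
proof -
  obtain g where gG: "g \<in> Gpk M p m" and geq: "Lp_norm M p (\<lambda>x. f x - g x) = Dpk M p k f"
    using assms(6) by blast
  obtain l a A where lA: "l \<le> m" "\<forall>i<l. A i \<in> sets M" "disjoint_family_on A {..<l}"
    "(\<Union>i<l. A i) = space M" "\<forall>x. g x = (\<Sum>i<l. a i * indicator (A i) x)"
    and gLp: "memLp M p g"
    using gG unfolding Gpk_def by blast
  have p0: "0 \<le> p" using assms(2) by simp
  have fm: "f \<in> borel_measurable M" and gm: "g \<in> borel_measurable M"
    using assms(3) gLp by (auto simp: memLp_def)
  have fgLp: "memLp M p (\<lambda>x. f x - g x)" using memLp_diff[OF p0 assms(3) gLp] .
  show ?thesis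
  proof (rule ccontr)
    assume nAE: "\<not> ?thesis"
    hence notAE: "\<not> (AE x in M. f x = g x)" using gG by blast
    define Bs where "Bs = (\<lambda>(i::nat, n::nat, s::bool). A i \<inter> {x \<in> space M.
        (if s then 1 else -1) * (f x - g x) > 1 / real (Suc n)})"
    have Bs_sets: "Bs t \<in> sets M" if "fst t < l" for t
    proof -
      obtain i n s where t: "t = (i, n, s)" by (metis prod.exhaust)
      have "{x \<in> space M. (if s then 1 else -1) * (f x - g x) > 1 / real (Suc n)} \<in> sets M"
        using fm gm by measurable
      thus ?thesis using that lA(2) t by (auto simp: Bs_def)
    qed
    have "\<exists>t. fst t < l \<and> emeasure M (Bs t) \<noteq> 0"
    proof (rule ccontr)
      assume "\<not> ?thesis"
      hence z: "\<And>t. fst t < l \<Longrightarrow> emeasure M (Bs t) = 0" by blast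
      have "AE x in M. x \<notin> (\<Union>t\<in>{..<l} \<times> UNIV. Bs t)"
        by (rule AE_not_in, rule null_sets_UN') (auto intro: z Bs_sets simp: null_sets_def)
      moreover have "f x = g x" if x: "x \<in> space M" "x \<notin> (\<Union>t\<in>{..<l} \<times> UNIV. Bs t)" for x
      proof (rule ccontr)
        assume ne: "f x \<noteq> g x"
        obtain i where i: "i < l" "x \<in> A i" using x lA(4) by blast
        obtain n where n: "1 / real (Suc n) < \<bar>f x - g x\<bar>"
          using ne reals_Archimedean[of "\<bar>f x - g x\<bar>"] by (auto simp: inverse_eq_divide)
        let ?s = "f x - g x > 0"
        have "x \<in> Bs (i, n, ?s)" using i x n by (auto simp: Bs_def)
        thus False using x i by auto
      qed
      ultimately have "AE x in M. f x = g x" by auto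
      thus False using notAE by simp
    qed
    then obtain i n s where t: "i < l" "emeasure M (Bs (i, n, s)) \<noteq> 0"
      by (metis fst_conv prod.exhaust)
    define B where "B = Bs (i, n, s)"
    define c :: real where "c = (if s then 1 else -1) / real (Suc n)"
    define h where "h x = g x + c * indicator B x" for x
    have Bsets: "B \<in> sets M" using Bs_sets[of "(i,n,s)"] t by (simp add: B_def)
    have BA: "B \<subseteq> A i" by (auto simp: B_def Bs_def)
    have strict: "\<bar>f x - h x\<bar> < \<bar>f x - g x\<bar>" if "x \<in> B" for x
    proof -
      have e: "1 / real (Suc n) > 0" by simp
      have hx: "h x = g x + c" using that by (simp add: h_def)
      show ?thesis
      proof (cases s)
        case True
        hence "f x - g x > 1 / real (Suc n)" "c = 1 / real (Suc n)" using that by (auto simp: B_def Bs_def c_def)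
        thus ?thesis using hx e by (smt (verit))
      next
        case False
        hence "-(f x - g x) > 1 / real (Suc n)" "c = - (1 / real (Suc n))" using that by (auto simp: B_def Bs_def c_def)
        thus ?thesis using hx e by (smt (verit))
      qed
    qed
    have le: "\<bar>f x - h x\<bar> \<le> \<bar>f x - g x\<bar>" for x
      using strict[of x] by (cases "x \<in> B") (auto simp: h_def)
    have hm: "h \<in> borel_measurable M" using gm Bsets unfolding h_def by measurable
    have fhint: "integrable M (\<lambda>x. \<bar>f x - h x\<bar> powr p)"
    proof (rule Bochner_Integration.integrable_bound)
      show "integrable M (\<lambda>x. \<bar>f x - g x\<bar> powr p)" using fgLp by (simp add: memLp_def)
      show "(\<lambda>x. \<bar>f x - h x\<bar> powr p) \<in> borel_measurable M" using fm hm by measurable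
      show "AE x in M. norm (\<bar>f x - h x\<bar> powr p) \<le> norm (\<bar>f x - g x\<bar> powr p)"
        using le p0 by (auto intro!: powr_mono2)
    qed
    have fhLp: "memLp M p (\<lambda>x. f x - h x)" using fhint fm hm by (simp add: memLp_def)
    have hLp: "memLp M p h" using memLp_diff[OF p0 assms(3) fhLp] by simp
    have hG: "h \<in> Gpk M p k"
      by (rule Gpk_extend[where c=c and B=B, OF lA(1) assms(5) lA(2-5) t(1) BA Bsets hLp]) (simp add: h_def)
    have fgint: "integrable M (\<lambda>x. \<bar>f x - g x\<bar> powr p)" using fgLp by (simp add: memLp_def)
    define u where "u x = \<bar>f x - g x\<bar> powr p - \<bar>f x - h x\<bar> powr p" for x
    have uint: "integrable M u" using fgint fhint unfolding u_def by auto
    have unn: "AE x in M. 0 \<le> u x" using le p0 by (auto simp: u_def intro!: powr_mono2)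
    have "integral\<^sup>L M u \<noteq> 0"
    proof
      assume "integral\<^sup>L M u = 0"
      hence AEu: "AE x in M. u x = 0" using integral_nonneg_eq_0_iff_AE[OF uint unn] by simp
      moreover have pos: "u x > 0" if "x \<in> B" for x
        using strict[OF that] p0 assms(2) unfolding u_def
        by (simp add: powr_less_mono2)
      have "AE x in M. x \<notin> B"
      proof (rule AE_mp[OF AEu], rule AE_I2, rule impI)
        fix x assume "u x = 0"
        thus "x \<notin> B" using pos[of x] by auto
      qed
      hence "emeasure M B = 0"
        using AE_iff_measurable[OF Bsets, of "\<lambda>x. x \<notin> B"] Bsets sets.sets_into_space by auto
      thus False using t(2) by (simp add: B_def)
    qed
    moreover have "integral\<^sup>L M u \<ge> 0" using unn by (rule integral_nonneg_AE)
    ultimately have "integral\<^sup>L M u > 0" by simp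
    hence lt: "integral\<^sup>L M (\<lambda>x. \<bar>f x - h x\<bar> powr p) < integral\<^sup>L M (\<lambda>x. \<bar>f x - g x\<bar> powr p)"
      using fgint fhint unfolding u_def by simp
    have nn: "0 \<le> integral\<^sup>L M (\<lambda>x. \<bar>f x - h x\<bar> powr p)" by (rule integral_nonneg_AE) auto
    have "Lp_norm M p (\<lambda>x. f x - h x) < Lp_norm M p (\<lambda>x. f x - g x)"
      unfolding Lp_norm_def using lt nn assms(2) by (intro powr_less_mono2) auto
    also have "\<dots> = Dpk M p k f" by (rule geq)
    also have "Dpk M p k f \<le> Lp_norm M p (\<lambda>x. f x - h x)"
      unfolding Dpk_def
    proof (rule cInf_lower)
      show "Lp_norm M p (\<lambda>x. f x - h x) \<in> {Lp_norm M p (\<lambda>x. f x - h x) |h. h \<in> Gpk M p k}"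
        using hG by blast
      show "bdd_below {Lp_norm M p (\<lambda>x. f x - h x) |h. h \<in> Gpk M p k}"
        by (rule bdd_belowI[of _ 0]) (auto simp: Lp_norm_def)
    qed
    finally show False by simp
  qed
qed

end
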